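(* Let $D$ be a Gauss diagram of an oriented virtual knot, and let $T$ be a triple of chords of $D$. Then $T$ is 3-movable if and only if $T$ is matched and all three chords of $T$ have the same 3-sign.
   Context: Gauss diagram: given an oriented virtual knot diagram, traverse the knot and record the classical crossings in order (each crossing is met twice). Place these points counterclockwise around a circle, and for each classical crossing draw a directed chord (arrow) from the point corresponding to passing over the crossing to the point corresponding to passing under it; each chord is labeled with the sign ($\pm1$) of the crossing. Virtual crossings do not appear. Triples and arcs: a triple of chords $T$ under consideration has its six endpoints lying on three arcs of the circle, each arc containing exactly two endpoints of chords of $T$ and no other chord endpoints of $D$; the three arcs are met in a cyclic (counterclockwise) order around the circle. 3-movable: $T$ is 3-movable if its three chords (equivalently, the corresponding three classical crossings of a virtual knot diagram with Gauss diagram $D$) can be repositioned by a classical Reidemeister III move, i.e. they are the three crossings of a Reidemeister III configuration: three strands in a disk pairwise crossing once, one strand passing over both others and one strand passing under both others, with the three arcs of the Gauss diagram corresponding to the three strands. Matched: $T$ is matched if one of its three arcs contains the two arrowheads of two chords of $T$, another arc contains the two arrowtails of two chords of $T$, and the third arc contains one head and one tail belonging to two distinct chords of $T$. 3-sign: for each chord $c$ of a matched triple define three numbers: its sign ($\pm1$, the sign of the crossing); its parity, $+1$ if $c$ intersects an even number of the other chords of $T$ and $-1$ if an odd number; its direction, $+1$ if $c$ points counterclockwise around the three arcs (from an arc to the next arc in the counterclockwise cyclic order of the three arcs) and $-1$ if it points clockwise. The 3-sign of $c$ is the product of its sign, parity and direction. *)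

theory Defs
  imports Complex_Main
begin

text \<open>The circle of a Gauss diagram with N chord endpoints is modelled by the positions
  0, 1, ..., N-1, placed counterclockwise in this order (position N-1 is followed by 0);
  traversing the knot corresponds to going counterclockwise.
  A chord (arrow) is a triple (tail, head, sign): tail = point where the knot passes over
  the crossing, head = point where it passes under, sign = sign of the crossing.\<close>

type_synonym chord = "nat \<times> nat \<times> int"

definition ctail :: "chord \<Rightarrow> nat" where "ctail c = fst c"
definition chead :: "chord \<Rightarrow> nat" where "chead c = fst (snd c)"
definition csign :: "chord \<Rightarrow> int" where "csign c = snd (snd c)"

definition ends :: "chord \<Rightarrow> nat set" where "ends c = {ctail c, chead c}"

definition gauss_diagram :: "nat \<Rightarrow> chord set \<Rightarrow> bool" where
  "gauss_diagram N D \<longleftrightarrow> finite D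
     \<and> (\<forall>c\<in>D. ctail c < N \<and> chead c < N \<and> ctail c \<noteq> chead c \<and> (csign c = 1 \<or> csign c = -1))
     \<and> (\<forall>c\<in>D. \<forall>d\<in>D. c \<noteq> d \<longrightarrow> ends c \<inter> ends d = {})
     \<and> (\<Union>c\<in>D. ends c) = {0..<N}"

definition arc :: "nat \<Rightarrow> nat \<Rightarrow> nat set" where
  "arc N a = {a, Suc a mod N}"

text \<open>T is a triple of chords of D under consideration, with its three arcs given by their
  starting points A: the six endpoints of T lie on three arcs, each containing exactly two
  endpoints of T and no other endpoint of D.\<close>
definition triple_with_arcs :: "nat \<Rightarrow> chord set \<Rightarrow> chord set \<Rightarrow> nat set \<Rightarrow> bool" where
  "triple_with_arcs N D T A \<longleftrightarrow> T \<subseteq> D \<and> card T = 3 \<and> A \<subseteq> {0..<N} \<and> card A = 3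
     \<and> (\<forall>a\<in>A. \<forall>b\<in>A. a \<noteq> b \<longrightarrow> arc N a \<inter> arc N b = {})
     \<and> (\<Union>a\<in>A. arc N a) = (\<Union>c\<in>T. ends c)"

definition arc_of :: "nat \<Rightarrow> nat set \<Rightarrow> nat \<Rightarrow> nat" where
  "arc_of N A p = (THE a. a \<in> A \<and> p \<in> arc N a)"

definition chord_at :: "chord set \<Rightarrow> nat \<Rightarrow> chord" where
  "chord_at T p = (THE c. c \<in> T \<and> p \<in> ends c)"

definition next_arc :: "nat set \<Rightarrow> nat \<Rightarrow> nat" where
  "next_arc A a = (if \<exists>b\<in>A. a < b then Min {b\<in>A. a < b} else Min A)"

definition matched :: "nat \<Rightarrow> chord set \<Rightarrow> nat set \<Rightarrow> bool" where
  "matched N T A \<longleftrightarrow> (\<exists>ah\<in>A. \<exists>atl\<in>A. \<exists>am\<in>A. ah \<noteq> atl \<and> ah \<noteq> am \<and> atl \<noteq> am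
     \<and> arc N ah \<subseteq> chead ` T \<and> arc N atl \<subseteq> ctail ` T
     \<and> (\<exists>c\<in>T. \<exists>d\<in>T. c \<noteq> d \<and> chead c \<in> arc N am \<and> ctail d \<in> arc N am))"

definition cyc_between :: "nat \<Rightarrow> nat \<Rightarrow> nat \<Rightarrow> bool" where
  "cyc_between x y z \<longleftrightarrow> (x < y \<and> y < z) \<or> (y < z \<and> z < x) \<or> (z < x \<and> x < y)"

definition crosses :: "chord \<Rightarrow> chord \<Rightarrow> bool" where
  "crosses c d \<longleftrightarrow> cyc_between (ctail c) (ctail d) (chead c) \<noteq> cyc_between (ctail c) (chead d) (chead c)"

definition parity :: "chord set \<Rightarrow> chord \<Rightarrow> int" where
  "parity T c = (if even (card {d\<in>T. d \<noteq> c \<and> crosses c d}) then 1 else -1)"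

definition direction :: "nat \<Rightarrow> nat set \<Rightarrow> chord \<Rightarrow> int" where
  "direction N A c = (if arc_of N A (chead c) = next_arc A (arc_of N A (ctail c)) then 1 else -1)"

definition three_sign :: "nat \<Rightarrow> chord set \<Rightarrow> nat set \<Rightarrow> chord \<Rightarrow> int" where
  "three_sign N T A c = csign c * parity T c * direction N A c"

definition cross2 :: "real \<times> real \<Rightarrow> real \<times> real \<Rightarrow> real" where
  "cross2 u v = fst u * snd v - snd u * fst v"

definition dot2 :: "real \<times> real \<Rightarrow> real \<times> real \<Rightarrow> real" where
  "dot2 u v = fst u * fst v + snd u * snd v"

definition on_line :: "real \<times> real \<Rightarrow> real \<times> real \<Rightarrow> real \<times> real \<Rightarrow> bool" where
  "on_line P V x \<longleftrightarrow> (\<exists>t. x = (fst P + t * fst V, snd P + t * snd V))"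

text \<open>A Reidemeister III configuration, realised by three oriented straight strands in the
  plane (line through P a with direction V a for the strand of arc a), pairwise crossing
  once at three distinct points X c, with heights h (distinct heights: one strand over both
  others, one under both others).  Each chord c of T is the crossing of the strands of the
  arcs containing its endpoints; its tail is on the over strand, its head on the under
  strand; its sign is the crossing sign (positive iff the pair (over direction, under
  direction) is positively oriented); along each strand the two crossings are met in the
  order in which the arc meets the corresponding endpoints (counterclockwise).\<close>
definition three_movable :: "nat \<Rightarrow> chord set \<Rightarrow> nat set \<Rightarrow> bool" where
  "three_movable N T A \<longleftrightarrow>
    (\<exists>(P :: nat \<Rightarrow> real \<times> real) (V :: nat \<Rightarrow> real \<times> real) (h :: nat \<Rightarrow> real)
        (X :: chord \<Rightarrow> real \<times> real).
       (\<forall>a\<in>A. \<forall>b\<in>A. a \<noteq> b \<longrightarrow> cross2 (V a) (V b) \<noteq> 0)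
     \<and> inj_on h A \<and> inj_on X T
     \<and> (\<forall>c\<in>T. arc_of N A (ctail c) \<noteq> arc_of N A (chead c)
          \<and> on_line (P (arc_of N A (ctail c))) (V (arc_of N A (ctail c))) (X c)
          \<and> on_line (P (arc_of N A (chead c))) (V (arc_of N A (chead c))) (X c)
          \<and> h (arc_of N A (ctail c)) > h (arc_of N A (chead c))
          \<and> real_of_int (csign c) = sgn (cross2 (V (arc_of N A (ctail c))) (V (arc_of N A (chead c)))))
     \<and> (\<forall>a\<in>A. dot2 (fst (X (chord_at T (Suc a mod N))) - fst (X (chord_at T a)),
                     snd (X (chord_at T (Suc a mod N))) - snd (X (chord_at T a))) (V a) > 0))"

end

theory Submission
  imports Defs
begin

lemma on_lineE:
  assumes "on_line P V x"
  obtains t where "fst x = fst P + t * fst V" "snd x = snd P + t * snd V"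
proof -
  from assms obtain t where "x = (fst P + t * fst V, snd P + t * snd V)" unfolding on_line_def by blast
  then show thesis using that[of t] by simp
qed

lemma gcore:
  fixes P1 P2 P3 V1 V2 V3 X12 X13 X23 :: "real \<times> real"
  assumes "on_line P1 V1 X12" "on_line P2 V2 X12" "on_line P1 V1 X13" "on_line P3 V3 X13"
    "on_line P2 V2 X23" "on_line P3 V3 X23"
    and nz: "V1 \<noteq> (0,0)" "V2 \<noteq> (0,0)" "V3 \<noteq> (0,0)"
  shows "sgn (dot2 (fst X13 - fst X12, snd X13 - snd X12) V1) * sgn (cross2 V1 V2)
       = sgn (dot2 (fst X23 - fst X13, snd X23 - snd X13) V3) * sgn (cross2 V2 V3)"
    "sgn (dot2 (fst X23 - fst X12, snd X23 - snd X12) V2) * sgn (cross2 V1 V2)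
       = sgn (dot2 (fst X23 - fst X13, snd X23 - snd X13) V3) * sgn (cross2 V1 V3)"
proof -
  obtain al where al: "fst X12 = fst P1 + al * fst V1" "snd X12 = snd P1 + al * snd V1" using assms(1) by (rule on_lineE)
  obtain be where be: "fst X12 = fst P2 + be * fst V2" "snd X12 = snd P2 + be * snd V2" using assms(2) by (rule on_lineE)
  obtain ga where ga: "fst X13 = fst P1 + ga * fst V1" "snd X13 = snd P1 + ga * snd V1" using assms(3) by (rule on_lineE)
  obtain de where de: "fst X13 = fst P3 + de * fst V3" "snd X13 = snd P3 + de * snd V3" using assms(4) by (rule on_lineE)
  obtain ep where ep: "fst X23 = fst P2 + ep * fst V2" "snd X23 = snd P2 + ep * snd V2" using assms(5) by (rule on_lineE)
  obtain ze where ze: "fst X23 = fst P3 + ze * fst V3" "snd X23 = snd P3 + ze * snd V3" using assms(6) by (rule on_lineE)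
  define a b c where "a = ga - al" and "b = ep - be" and "c = ze - de"
  obtain v1x v1y where v1: "V1 = (v1x, v1y)" by (cases V1)
  obtain v2x v2y where v2: "V2 = (v2x, v2y)" by (cases V2)
  obtain v3x v3y where v3: "V3 = (v3x, v3y)" by (cases V3)
  have e1: "fst X13 - fst X12 = a * v1x" "snd X13 - snd X12 = a * v1y"
    using al ga by (simp_all add: a_def v1 algebra_simps)
  have e2: "fst X23 - fst X12 = b * v2x" "snd X23 - snd X12 = b * v2y"
    using be ep by (simp_all add: b_def v2 algebra_simps)
  have e3: "fst X23 - fst X13 = c * v3x" "snd X23 - snd X13 = c * v3y"
    using de ze by (simp_all add: c_def v3 algebra_simps)
  have vx: "a * v1x + c * v3x = b * v2x" "a * v1y + c * v3y = b * v2y"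
    using e1 e2 e3 by linarith+
  have r1: "a * (v1x * v2y - v1y * v2x) = c * (v2x * v3y - v2y * v3x)"
  proof -
    have "(a * v1x + c * v3x) * v2y - (a * v1y + c * v3y) * v2x = b * v2x * v2y - b * v2y * v2x"
      using vx by simp
    thus ?thesis by (simp add: algebra_simps)
  qed
  have r2: "b * (v1x * v2y - v1y * v2x) = c * (v1x * v3y - v1y * v3x)"
  proof -
    have "(a * v1x + c * v3x) * v1y - (a * v1y + c * v3y) * v1x = b * v2x * v1y - b * v2y * v1x"
      using vx by simp
    thus ?thesis by (simp add: algebra_simps)
  qed
  have p1: "v1x * v1x + v1y * v1y > 0" using nz(1) v1
    by (auto simp: sum_squares_gt_zero_iff)
  have p2: "v2x * v2x + v2y * v2y > 0" using nz(2) v2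
    by (auto simp: sum_squares_gt_zero_iff)
  have p3: "v3x * v3x + v3y * v3y > 0" using nz(3) v3
    by (auto simp: sum_squares_gt_zero_iff)
  have d1: "dot2 (fst X13 - fst X12, snd X13 - snd X12) V1 = a * (v1x * v1x + v1y * v1y)"
    by (simp add: dot2_def e1 v1 algebra_simps)
  have d2: "dot2 (fst X23 - fst X12, snd X23 - snd X12) V2 = b * (v2x * v2x + v2y * v2y)"
    by (simp add: dot2_def e2 v2 algebra_simps)
  have d3: "dot2 (fst X23 - fst X13, snd X23 - snd X13) V3 = c * (v3x * v3x + v3y * v3y)"
    by (simp add: dot2_def e3 v3 algebra_simps)
  have s1: "sgn (dot2 (fst X13 - fst X12, snd X13 - snd X12) V1) = sgn a" using p1 d1 by (simp add: sgn_mult)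
  have s2: "sgn (dot2 (fst X23 - fst X12, snd X23 - snd X12) V2) = sgn b" using p2 d2 by (simp add: sgn_mult)
  have s3: "sgn (dot2 (fst X23 - fst X13, snd X23 - snd X13) V3) = sgn c" using p3 d3 by (simp add: sgn_mult)
  show "sgn (dot2 (fst X13 - fst X12, snd X13 - snd X12) V1) * sgn (cross2 V1 V2)
       = sgn (dot2 (fst X23 - fst X13, snd X23 - snd X13) V3) * sgn (cross2 V2 V3)"
    unfolding s1 s3 by (simp add: cross2_def v1 v2 v3 flip: sgn_mult r1)
  show "sgn (dot2 (fst X23 - fst X12, snd X23 - snd X12) V2) * sgn (cross2 V1 V2)
       = sgn (dot2 (fst X23 - fst X13, snd X23 - snd X13) V3) * sgn (cross2 V1 V3)"
    unfolding s2 s3 by (simp add: cross2_def v1 v2 v3 flip: sgn_mult r2)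
qed


definition sb :: "bool \<Rightarrow> int" where "sb b = (if b then 1 else -1)"

lemma cross2_anti: "cross2 u v = - cross2 v u" by (simp add: cross2_def)
lemma dot2_swap: "dot2 (a - b, c - d) v = - dot2 (b - a, d - c) v" by (simp add: dot2_def algebra_simps)
lemma cross2_zero: "cross2 (0,0) v = 0" by (simp add: cross2_def)

lemma sgn_sb: "sgn (of_int (sb b) :: real) = of_int (sb b)" by (simp add: sb_def)

lemma sgn_helper:
  assumes "(ov = x \<and> uv = y) \<or> (ov = y \<and> uv = x)" "x \<noteq> y"
    "real_of_int cs = sgn (cross2 (V ov) (V uv))"
  shows "sgn (cross2 (V x) (V y)) = of_int (cs * sb (ov = x))"
  using assms(1)
proof (elim disjE conjE)
  assume "ov = x" "uv = y" then show ?thesis using assms(3) by (simp add: sb_def)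
next
  assume "ov = y" "uv = x" then show ?thesis using assms(2,3)
    by (simp add: sb_def cross2_anti[of "V x"] sgn_minus)
qed

lemma geom_fwd:
  fixes a1 a2 a3 :: nat and k12 k13 k23 :: chord and ov uv :: "chord \<Rightarrow> nat" and F S :: "nat \<Rightarrow> chord"
    and b1 b2 b3 :: bool and P V :: "nat \<Rightarrow> real \<times> real" and h :: "nat \<Rightarrow> real"
    and X :: "chord \<Rightarrow> real \<times> real"
  assumes da: "a1 \<noteq> a2" "a1 \<noteq> a3" "a2 \<noteq> a3"
  and o12: "(ov k12 = a1 \<and> uv k12 = a2) \<or> (ov k12 = a2 \<and> uv k12 = a1)"
  and o13: "(ov k13 = a1 \<and> uv k13 = a3) \<or> (ov k13 = a3 \<and> uv k13 = a1)"
  and o23: "(ov k23 = a2 \<and> uv k23 = a3) \<or> (ov k23 = a3 \<and> uv k23 = a2)"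
  and F1: "F a1 = (if b1 then k12 else k13)" "S a1 = (if b1 then k13 else k12)"
  and F2: "F a2 = (if b2 then k12 else k23)" "S a2 = (if b2 then k23 else k12)"
  and F3: "F a3 = (if b3 then k13 else k23)" "S a3 = (if b3 then k23 else k13)"
  and cr: "\<forall>a\<in>{a1,a2,a3}. \<forall>b\<in>{a1,a2,a3}. a \<noteq> b \<longrightarrow> cross2 (V a) (V b) \<noteq> 0"
  and ch: "\<forall>c\<in>{k12,k13,k23}. ov c \<noteq> uv c \<and> on_line (P (ov c)) (V (ov c)) (X c)
        \<and> on_line (P (uv c)) (V (uv c)) (X c) \<and> h (ov c) > h (uv c)
        \<and> real_of_int (csign c) = sgn (cross2 (V (ov c)) (V (uv c)))"
  and st: "\<forall>a\<in>{a1,a2,a3}. dot2 (fst (X (S a)) - fst (X (F a)), snd (X (S a)) - snd (X (F a))) (V a) > 0"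
  shows "\<not>((ov k12 = a1 \<and> ov k23 = a2 \<and> ov k13 = a3) \<or> (ov k12 = a2 \<and> ov k23 = a3 \<and> ov k13 = a1))
     \<and> sb b1 * (csign k12 * sb (ov k12 = a1)) = sb b3 * (csign k23 * sb (ov k23 = a2))
     \<and> sb b2 * (csign k12 * sb (ov k12 = a1)) = sb b3 * (csign k13 * sb (ov k13 = a1))"
proof -
  have c12: "on_line (P a1) (V a1) (X k12)" "on_line (P a2) (V a2) (X k12)" "h (ov k12) > h (uv k12)"
     "real_of_int (csign k12) = sgn (cross2 (V (ov k12)) (V (uv k12)))"
    using ch o12 by auto
  have c13: "on_line (P a1) (V a1) (X k13)" "on_line (P a3) (V a3) (X k13)" "h (ov k13) > h (uv k13)"
     "real_of_int (csign k13) = sgn (cross2 (V (ov k13)) (V (uv k13)))"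
    using ch o13 by auto
  have c23: "on_line (P a2) (V a2) (X k23)" "on_line (P a3) (V a3) (X k23)" "h (ov k23) > h (uv k23)"
     "real_of_int (csign k23) = sgn (cross2 (V (ov k23)) (V (uv k23)))"
    using ch o23 by auto
  have acyc: "\<not>((ov k12 = a1 \<and> ov k23 = a2 \<and> ov k13 = a3) \<or> (ov k12 = a2 \<and> ov k23 = a3 \<and> ov k13 = a1))"
  proof
    assume "(ov k12 = a1 \<and> ov k23 = a2 \<and> ov k13 = a3) \<or> (ov k12 = a2 \<and> ov k23 = a3 \<and> ov k13 = a1)"
    then show False
    proof
      assume a: "ov k12 = a1 \<and> ov k23 = a2 \<and> ov k13 = a3"
      then have "uv k12 = a2" "uv k23 = a3" "uv k13 = a1" using o12 o13 o23 da by auto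
      then show False using a c12(3) c13(3) c23(3) by simp
    next
      assume a: "ov k12 = a2 \<and> ov k23 = a3 \<and> ov k13 = a1"
      then have "uv k12 = a1" "uv k23 = a2" "uv k13 = a3" using o12 o13 o23 da by auto
      then show False using a c12(3) c13(3) c23(3) by simp
    qed
  qed
  have nz12: "cross2 (V a1) (V a2) \<noteq> 0" and nz13: "cross2 (V a1) (V a3) \<noteq> 0"
    and nz23: "cross2 (V a2) (V a3) \<noteq> 0" using cr da by auto
  have vnz: "V a1 \<noteq> (0,0)" "V a2 \<noteq> (0,0)" "V a3 \<noteq> (0,0)"
    using nz12 nz13 nz23 cross2_zero cross2_anti by (metis neg_equal_0_iff_equal)+
  have s12: "sgn (cross2 (V a1) (V a2)) = of_int (csign k12 * sb (ov k12 = a1))"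
    by (rule sgn_helper[OF o12 _ c12(4)]) (use da in auto)
  have s13: "sgn (cross2 (V a1) (V a3)) = of_int (csign k13 * sb (ov k13 = a1))"
    by (rule sgn_helper[OF o13 _ c13(4)]) (use da in auto)
  have s23: "sgn (cross2 (V a2) (V a3)) = of_int (csign k23 * sb (ov k23 = a2))"
    by (rule sgn_helper[OF o23 _ c23(4)]) (use da in auto)
  have st1: "dot2 (fst (X (S a1)) - fst (X (F a1)), snd (X (S a1)) - snd (X (F a1))) (V a1) > 0"
    and st2: "dot2 (fst (X (S a2)) - fst (X (F a2)), snd (X (S a2)) - snd (X (F a2))) (V a2) > 0"
    and st3: "dot2 (fst (X (S a3)) - fst (X (F a3)), snd (X (S a3)) - snd (X (F a3))) (V a3) > 0"
    using st by auto
  have t1: "sgn (dot2 (fst (X k13) - fst (X k12), snd (X k13) - snd (X k12)) (V a1)) = of_int (sb b1)"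
    using st1 unfolding F1 by (cases b1) (auto simp: sb_def dot2_swap[of "fst (X k12)"])
  have t2: "sgn (dot2 (fst (X k23) - fst (X k12), snd (X k23) - snd (X k12)) (V a2)) = of_int (sb b2)"
    using st2 unfolding F2 by (cases b2) (auto simp: sb_def dot2_swap[of "fst (X k12)"])
  have t3: "sgn (dot2 (fst (X k23) - fst (X k13), snd (X k23) - snd (X k13)) (V a3)) = of_int (sb b3)"
    using st3 unfolding F3 by (cases b3) (auto simp: sb_def dot2_swap[of "fst (X k13)"])
  note g = gcore[OF c12(1) c12(2) c13(1) c13(2) c23(1) c23(2) vnz]
  have e1: "real_of_int (sb b1 * (csign k12 * sb (ov k12 = a1))) = of_int (sb b3 * (csign k23 * sb (ov k23 = a2)))"
    using g(1) unfolding t1 t3 s12 s23 by simp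
  have e2: "real_of_int (sb b2 * (csign k12 * sb (ov k12 = a1))) = of_int (sb b3 * (csign k13 * sb (ov k13 = a1)))"
    using g(2) unfolding t2 t3 s12 s13 by simp
  show ?thesis using acyc e1 e2 by (simp only: of_int_eq_iff) simp
qed


lemma pm1_sq: "(s::real) = 1 \<or> s = -1 \<Longrightarrow> s * s = 1" by auto

lemma on_lineI: "fst x = fst P + t * fst V \<Longrightarrow> snd x = snd P + t * snd V \<Longrightarrow> on_line P V x"
  unfolding on_line_def by (rule exI[of _ t]) (simp add: prod_eq_iff)

lemma S_helper:
  assumes "(ov = x \<and> uv = y) \<or> (ov = y \<and> uv = x)" "x \<noteq> y" "cross2 (V x) (V y) = s"
    "s = 1 \<or> s = -1" "real_of_int cs = s * of_int (sb (ov = x))"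
  shows "real_of_int cs = sgn (cross2 (V ov) (V uv))"
  using assms(1)
proof (elim disjE conjE)
  assume "ov = x" "uv = y" then show ?thesis using assms(3-5) by (auto simp: sb_def)
next
  assume "ov = y" "uv = x" then show ?thesis using assms(2-5)
    by (auto simp: sb_def cross2_anti[of "V y"] sgn_minus)
qed

lemma geom_bwd:
  fixes a1 a2 a3 :: nat and k12 k13 k23 :: chord and ov uv :: "chord \<Rightarrow> nat" and F S :: "nat \<Rightarrow> chord"
    and b1 b2 b3 :: bool
  assumes da: "a1 \<noteq> a2" "a1 \<noteq> a3" "a2 \<noteq> a3" and dk: "k12 \<noteq> k13" "k12 \<noteq> k23" "k13 \<noteq> k23"
  and o12: "(ov k12 = a1 \<and> uv k12 = a2) \<or> (ov k12 = a2 \<and> uv k12 = a1)"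
  and o13: "(ov k13 = a1 \<and> uv k13 = a3) \<or> (ov k13 = a3 \<and> uv k13 = a1)"
  and o23: "(ov k23 = a2 \<and> uv k23 = a3) \<or> (ov k23 = a3 \<and> uv k23 = a2)"
  and F1: "F a1 = (if b1 then k12 else k13)" "S a1 = (if b1 then k13 else k12)"
  and F2: "F a2 = (if b2 then k12 else k23)" "S a2 = (if b2 then k23 else k12)"
  and F3: "F a3 = (if b3 then k13 else k23)" "S a3 = (if b3 then k23 else k13)"
  and sg: "csign k12 = 1 \<or> csign k12 = -1" "csign k13 = 1 \<or> csign k13 = -1" "csign k23 = 1 \<or> csign k23 = -1"
  and acyc: "\<not>((ov k12 = a1 \<and> ov k23 = a2 \<and> ov k13 = a3) \<or> (ov k12 = a2 \<and> ov k23 = a3 \<and> ov k13 = a1))"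
  and rel1: "sb b1 * (csign k12 * sb (ov k12 = a1)) = sb b3 * (csign k23 * sb (ov k23 = a2))"
  and rel2: "sb b2 * (csign k12 * sb (ov k12 = a1)) = sb b3 * (csign k13 * sb (ov k13 = a1))"
  shows "\<exists>(P :: nat \<Rightarrow> real \<times> real) (V :: nat \<Rightarrow> real \<times> real) (h :: nat \<Rightarrow> real) (X :: chord \<Rightarrow> real \<times> real).
   (\<forall>a\<in>{a1,a2,a3}. \<forall>b\<in>{a1,a2,a3}. a \<noteq> b \<longrightarrow> cross2 (V a) (V b) \<noteq> 0)
   \<and> inj_on h {a1,a2,a3} \<and> inj_on X {k12,k13,k23}
   \<and> (\<forall>c\<in>{k12,k13,k23}. ov c \<noteq> uv c \<and> on_line (P (ov c)) (V (ov c)) (X c)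
        \<and> on_line (P (uv c)) (V (uv c)) (X c) \<and> h (ov c) > h (uv c)
        \<and> real_of_int (csign c) = sgn (cross2 (V (ov c)) (V (uv c))))
   \<and> (\<forall>a\<in>{a1,a2,a3}. dot2 (fst (X (S a)) - fst (X (F a)), snd (X (S a)) - snd (X (F a))) (V a) > 0)"
proof -
  define s12 :: real where "s12 = of_int (csign k12 * sb (ov k12 = a1))"
  define s13 :: real where "s13 = of_int (csign k13 * sb (ov k13 = a1))"
  define s23 :: real where "s23 = of_int (csign k23 * sb (ov k23 = a2))"
  define t1 :: real where "t1 = of_int (sb b1)"
  define t2 :: real where "t2 = of_int (sb b2)"
  define t3 :: real where "t3 = of_int (sb b3)"
  have pm: "s12 = 1 \<or> s12 = -1" "s13 = 1 \<or> s13 = -1" "s23 = 1 \<or> s23 = -1"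
      "t1 = 1 \<or> t1 = -1" "t2 = 1 \<or> t2 = -1" "t3 = 1 \<or> t3 = -1"
    using sg by (auto simp: s12_def s13_def s23_def t1_def t2_def t3_def sb_def)
  have bt: "b1 \<longleftrightarrow> t1 = 1" "b2 \<longleftrightarrow> t2 = 1" "b3 \<longleftrightarrow> t3 = 1"
    by (auto simp: t1_def t2_def t3_def sb_def)
  have r1: "t1 * s12 = t3 * s23" unfolding t1_def t3_def s12_def s23_def
    by (simp only: of_int_mult[symmetric] rel1)
  have r2: "t2 * s12 = t3 * s13" unfolding t2_def t3_def s12_def s13_def
    by (simp only: of_int_mult[symmetric] rel2)
  have cs12: "of_int (csign k12) = s12 * of_int (sb (ov k12 = a1))"
    using sg by (auto simp: s12_def sb_def)
  have cs13: "of_int (csign k13) = s13 * of_int (sb (ov k13 = a1))"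
    using sg by (auto simp: s13_def sb_def)
  have cs23: "of_int (csign k23) = s23 * of_int (sb (ov k23 = a2))"
    using sg by (auto simp: s23_def sb_def)
  define V :: "nat \<Rightarrow> real \<times> real" where
    "V = (\<lambda>a. if a = a1 then (1,0) else if a = a2 then (0, s12) else (- (s12 * s23), s13))"
  define P :: "nat \<Rightarrow> real \<times> real" where "P = (\<lambda>a. if a = a3 then (t1, 0) else (0,0))"
  define h :: "nat \<Rightarrow> real" where
    "h = (\<lambda>a. (if ov k12 = a then 1 else 0) + (if ov k13 = a then 1 else 0) + (if ov k23 = a then 1 else 0))"
  define X :: "chord \<Rightarrow> real \<times> real" where
    "X = (\<lambda>c. if c = k12 then (0,0) else if c = k13 then (t1,0) else (0, t1 * s12 * s13 * s23))"
  have V1: "V a1 = (1,0)" and V2: "V a2 = (0, s12)" and V3: "V a3 = (- (s12 * s23), s13)"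
    using da by (auto simp: V_def)
  have P1: "P a1 = (0,0)" and P2: "P a2 = (0,0)" and P3: "P a3 = (t1,0)"
    using da by (auto simp: P_def)
  have X12: "X k12 = (0,0)" and X13: "X k13 = (t1,0)" and X23: "X k23 = (0, t1 * s12 * s13 * s23)"
    using dk by (auto simp: X_def)
  have c12: "cross2 (V a1) (V a2) = s12" and c13: "cross2 (V a1) (V a3) = s13"
    and c23: "cross2 (V a2) (V a3) = s23"
    using pm1_sq[OF pm(1)] by (auto simp: V1 V2 V3 cross2_def algebra_simps)
  have c21: "cross2 (V a2) (V a1) = - s12" by (simp add: cross2_anti[of "V a2"] c12)
  have c31: "cross2 (V a3) (V a1) = - s13" by (simp add: cross2_anti[of "V a3"] c13)
  have c32: "cross2 (V a3) (V a2) = - s23" by (simp add: cross2_anti[of "V a3"] c23)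
  have nzs: "s12 \<noteq> 0" "s13 \<noteq> 0" "s23 \<noteq> 0" "t1 \<noteq> 0" using pm by auto
  have G1: "\<forall>a\<in>{a1,a2,a3}. \<forall>b\<in>{a1,a2,a3}. a \<noteq> b \<longrightarrow> cross2 (V a) (V b) \<noteq> 0"
    using nzs by (simp add: c12 c13 c23 c21 c31 c32)
  have G2hh: "inj_on h {a1,a2,a3} \<and> h (ov k12) > h (uv k12) \<and> h (ov k13) > h (uv k13) \<and> h (ov k23) > h (uv k23)"
    using o12 o13 o23 acyc da by (elim disjE conjE; simp add: h_def)
  then have G2: "inj_on h {a1,a2,a3}" and hh: "h (ov k12) > h (uv k12)" "h (ov k13) > h (uv k13)" "h (ov k23) > h (uv k23)"
    by auto
  have prodnz: "t1 * s12 * s13 * s23 \<noteq> 0" using nzs by simp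
  have G3: "inj_on X {k12,k13,k23}"
    using dk nzs(4) prodnz by (auto simp: X12 X13 X23)
  have L12: "on_line (P a1) (V a1) (X k12)" "on_line (P a2) (V a2) (X k12)"
    by (auto simp: P1 P2 V1 V2 X12 intro!: on_lineI[where t=0])
  have L13a: "on_line (P a1) (V a1) (X k13)"
    by (auto simp: P1 V1 X13 intro!: on_lineI[where t=t1])
  have L13b: "on_line (P a3) (V a3) (X k13)"
    by (auto simp: P3 V3 X13 intro!: on_lineI[where t=0])
  note L13 = L13a L13b
  have L23a: "on_line (P a2) (V a2) (X k23)"
    using pm1_sq[OF pm(1)] by (auto simp: P2 V2 X23 algebra_simps intro!: on_lineI[where t="t1 * s13 * s23"])
  have L23b: "on_line (P a3) (V a3) (X k23)"
    using pm1_sq[OF pm(1)] pm1_sq[OF pm(3)]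
    by (auto simp: P3 V3 X23 algebra_simps intro!: on_lineI[where t="t1 * s12 * s23"])
  note L23 = L23a L23b
  have S12: "real_of_int (csign k12) = sgn (cross2 (V (ov k12)) (V (uv k12)))"
    by (rule S_helper[OF o12 da(1) c12 pm(1) cs12])
  have S13: "real_of_int (csign k13) = sgn (cross2 (V (ov k13)) (V (uv k13)))"
    by (rule S_helper[OF o13 da(2) c13 pm(2) cs13])
  have S23: "real_of_int (csign k23) = sgn (cross2 (V (ov k23)) (V (uv k23)))"
    by (rule S_helper[OF o23 da(3) c23 pm(3) cs23])
  have G4: "\<forall>c\<in>{k12,k13,k23}. ov c \<noteq> uv c \<and> on_line (P (ov c)) (V (ov c)) (X c)
        \<and> on_line (P (uv c)) (V (uv c)) (X c) \<and> h (ov c) > h (uv c)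
        \<and> real_of_int (csign c) = sgn (cross2 (V (ov c)) (V (uv c)))"
  proof -
    have "ov k12 \<noteq> uv k12 \<and> on_line (P (ov k12)) (V (ov k12)) (X k12)
        \<and> on_line (P (uv k12)) (V (uv k12)) (X k12)"
      using o12 L12 da by (elim disjE conjE) auto
    moreover have "ov k13 \<noteq> uv k13 \<and> on_line (P (ov k13)) (V (ov k13)) (X k13)
        \<and> on_line (P (uv k13)) (V (uv k13)) (X k13)"
      using o13 L13 da by (elim disjE conjE) auto
    moreover have "ov k23 \<noteq> uv k23 \<and> on_line (P (ov k23)) (V (ov k23)) (X k23)
        \<and> on_line (P (uv k23)) (V (uv k23)) (X k23)"
      using o23 L23 da by (elim disjE conjE) auto
    ultimately show ?thesis using S12 S13 S23 hh by simp
  qed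
  have sq: "s12 * s12 = 1" "s13 * s13 = 1" "s23 * s23 = 1" "t1 * t1 = 1"
    using pm by auto
  have h3: "t3 = t1 * s12 * s23"
  proof -
    have "t3 = t3 * (s23 * s23)" using sq by simp
    also have "\<dots> = (t3 * s23) * s23" by (simp add: algebra_simps)
    also have "\<dots> = t1 * s12 * s23" using r1 by simp
    finally show ?thesis .
  qed
  have h2: "t2 = t1 * s13 * s23"
  proof -
    have "t2 = t2 * (s12 * s12)" using sq by simp
    also have "\<dots> = (t2 * s12) * s12" by (simp add: algebra_simps)
    also have "\<dots> = t1 * s12 * s23 * s13 * s12" using r2 h3 by simp
    also have "\<dots> = t1 * s13 * s23 * (s12 * s12)" by (simp add: algebra_simps)
    finally show ?thesis using sq by simp
  qed
  have d1: "dot2 (fst (X k13) - fst (X k12), snd (X k13) - snd (X k12)) (V a1) = t1"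
    by (simp add: X12 X13 V1 dot2_def)
  have d2: "dot2 (fst (X k23) - fst (X k12), snd (X k23) - snd (X k12)) (V a2) = t2"
  proof -
    have "dot2 (fst (X k23) - fst (X k12), snd (X k23) - snd (X k12)) (V a2) = t1 * s13 * s23 * (s12 * s12)"
      by (simp add: X12 X23 V2 dot2_def algebra_simps)
    then show ?thesis using sq h2 by simp
  qed
  have d3: "dot2 (fst (X k23) - fst (X k13), snd (X k23) - snd (X k13)) (V a3) = 2 * t3"
  proof -
    have "dot2 (fst (X k23) - fst (X k13), snd (X k23) - snd (X k13)) (V a3)
       = t1 * s12 * s23 + t1 * s12 * s23 * (s13 * s13)"
      by (simp add: X13 X23 V3 dot2_def algebra_simps)
    then show ?thesis using sq h3 by simp
  qed
  have G5a: "dot2 (fst (X (S a1)) - fst (X (F a1)), snd (X (S a1)) - snd (X (F a1))) (V a1) > 0"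
    using d1 bt(1) pm(4) by (cases b1) (auto simp: F1 dot2_swap[of "fst (X k12)"])
  have G5b: "dot2 (fst (X (S a2)) - fst (X (F a2)), snd (X (S a2)) - snd (X (F a2))) (V a2) > 0"
    using d2 bt(2) pm(5) by (cases b2) (auto simp: F2 dot2_swap[of "fst (X k12)"])
  have G5c: "dot2 (fst (X (S a3)) - fst (X (F a3)), snd (X (S a3)) - snd (X (F a3))) (V a3) > 0"
    using d3 bt(3) pm(6) by (cases b3) (auto simp: F3 dot2_swap[of "fst (X k13)"])
  have G5: "\<forall>a\<in>{a1,a2,a3}. dot2 (fst (X (S a)) - fst (X (F a)), snd (X (S a)) - snd (X (F a))) (V a) > 0"
    using G5a G5b G5c by simp
  show ?thesis using G1 G2 G3 G4 G5 by blast
qed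

lemma geom_iff:
  fixes a1 a2 a3 :: nat and k12 k13 k23 :: chord and ov uv :: "chord \<Rightarrow> nat" and F S :: "nat \<Rightarrow> chord"
    and b1 b2 b3 :: bool
  assumes A: "A = {a1,a2,a3}" and T: "T = {k12,k13,k23}"
  and da: "a1 \<noteq> a2" "a1 \<noteq> a3" "a2 \<noteq> a3" and dk: "k12 \<noteq> k13" "k12 \<noteq> k23" "k13 \<noteq> k23"
  and o12: "(ov k12 = a1 \<and> uv k12 = a2) \<or> (ov k12 = a2 \<and> uv k12 = a1)"
  and o13: "(ov k13 = a1 \<and> uv k13 = a3) \<or> (ov k13 = a3 \<and> uv k13 = a1)"
  and o23: "(ov k23 = a2 \<and> uv k23 = a3) \<or> (ov k23 = a3 \<and> uv k23 = a2)"
  and F1: "F a1 = (if b1 then k12 else k13)" "S a1 = (if b1 then k13 else k12)"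
  and F2: "F a2 = (if b2 then k12 else k23)" "S a2 = (if b2 then k23 else k12)"
  and F3: "F a3 = (if b3 then k13 else k23)" "S a3 = (if b3 then k23 else k13)"
  and sg: "csign k12 = 1 \<or> csign k12 = -1" "csign k13 = 1 \<or> csign k13 = -1" "csign k23 = 1 \<or> csign k23 = -1"
  shows "(\<exists>(P :: nat \<Rightarrow> real \<times> real) (V :: nat \<Rightarrow> real \<times> real) (h :: nat \<Rightarrow> real) (X :: chord \<Rightarrow> real \<times> real).
   (\<forall>a\<in>A. \<forall>b\<in>A. a \<noteq> b \<longrightarrow> cross2 (V a) (V b) \<noteq> 0)
   \<and> inj_on h A \<and> inj_on X T
   \<and> (\<forall>c\<in>T. ov c \<noteq> uv c \<and> on_line (P (ov c)) (V (ov c)) (X c)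
        \<and> on_line (P (uv c)) (V (uv c)) (X c) \<and> h (ov c) > h (uv c)
        \<and> real_of_int (csign c) = sgn (cross2 (V (ov c)) (V (uv c))))
   \<and> (\<forall>a\<in>A. dot2 (fst (X (S a)) - fst (X (F a)), snd (X (S a)) - snd (X (F a))) (V a) > 0))
   \<longleftrightarrow> (\<not>((ov k12 = a1 \<and> ov k23 = a2 \<and> ov k13 = a3) \<or> (ov k12 = a2 \<and> ov k23 = a3 \<and> ov k13 = a1))
     \<and> sb b1 * (csign k12 * sb (ov k12 = a1)) = sb b3 * (csign k23 * sb (ov k23 = a2))
     \<and> sb b2 * (csign k12 * sb (ov k12 = a1)) = sb b3 * (csign k13 * sb (ov k13 = a1)))"
  unfolding A T
proof
  assume "\<exists>(P :: nat \<Rightarrow> real \<times> real) (V :: nat \<Rightarrow> real \<times> real) (h :: nat \<Rightarrow> real) (X :: chord \<Rightarrow> real \<times> real).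
   (\<forall>a\<in>{a1,a2,a3}. \<forall>b\<in>{a1,a2,a3}. a \<noteq> b \<longrightarrow> cross2 (V a) (V b) \<noteq> 0)
   \<and> inj_on h {a1,a2,a3} \<and> inj_on X {k12,k13,k23}
   \<and> (\<forall>c\<in>{k12,k13,k23}. ov c \<noteq> uv c \<and> on_line (P (ov c)) (V (ov c)) (X c)
        \<and> on_line (P (uv c)) (V (uv c)) (X c) \<and> h (ov c) > h (uv c)
        \<and> real_of_int (csign c) = sgn (cross2 (V (ov c)) (V (uv c))))
   \<and> (\<forall>a\<in>{a1,a2,a3}. dot2 (fst (X (S a)) - fst (X (F a)), snd (X (S a)) - snd (X (F a))) (V a) > 0)"
  then show "\<not>((ov k12 = a1 \<and> ov k23 = a2 \<and> ov k13 = a3) \<or> (ov k12 = a2 \<and> ov k23 = a3 \<and> ov k13 = a1))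
     \<and> sb b1 * (csign k12 * sb (ov k12 = a1)) = sb b3 * (csign k23 * sb (ov k23 = a2))
     \<and> sb b2 * (csign k12 * sb (ov k12 = a1)) = sb b3 * (csign k13 * sb (ov k13 = a1))"
    apply (elim exE conjE)
    apply (rule geom_fwd[OF da o12 o13 o23 F1 F2 F3])
      apply assumption+
    done
next
  assume "\<not>((ov k12 = a1 \<and> ov k23 = a2 \<and> ov k13 = a3) \<or> (ov k12 = a2 \<and> ov k23 = a3 \<and> ov k13 = a1))
     \<and> sb b1 * (csign k12 * sb (ov k12 = a1)) = sb b3 * (csign k23 * sb (ov k23 = a2))
     \<and> sb b2 * (csign k12 * sb (ov k12 = a1)) = sb b3 * (csign k13 * sb (ov k13 = a1))"
  then have r: "\<not>((ov k12 = a1 \<and> ov k23 = a2 \<and> ov k13 = a3) \<or> (ov k12 = a2 \<and> ov k23 = a3 \<and> ov k13 = a1))"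
     "sb b1 * (csign k12 * sb (ov k12 = a1)) = sb b3 * (csign k23 * sb (ov k23 = a2))"
     "sb b2 * (csign k12 * sb (ov k12 = a1)) = sb b3 * (csign k13 * sb (ov k13 = a1))" by blast+
  show "\<exists>(P :: nat \<Rightarrow> real \<times> real) (V :: nat \<Rightarrow> real \<times> real) (h :: nat \<Rightarrow> real) (X :: chord \<Rightarrow> real \<times> real).
   (\<forall>a\<in>{a1,a2,a3}. \<forall>b\<in>{a1,a2,a3}. a \<noteq> b \<longrightarrow> cross2 (V a) (V b) \<noteq> 0)
   \<and> inj_on h {a1,a2,a3} \<and> inj_on X {k12,k13,k23}
   \<and> (\<forall>c\<in>{k12,k13,k23}. ov c \<noteq> uv c \<and> on_line (P (ov c)) (V (ov c)) (X c)
        \<and> on_line (P (uv c)) (V (uv c)) (X c) \<and> h (ov c) > h (uv c)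
        \<and> real_of_int (csign c) = sgn (cross2 (V (ov c)) (V (uv c))))
   \<and> (\<forall>a\<in>{a1,a2,a3}. dot2 (fst (X (S a)) - fst (X (F a)), snd (X (S a)) - snd (X (F a))) (V a) > 0)"
    by (rule geom_bwd[OF da dk o12 o13 o23 F1 F2 F3 sg r])
qed

lemma core4:
  fixes x1 y1 x2 y2 x3 y3 p q r s :: nat
  assumes "distinct [x1,y1,x2,y2,x3,y3]" "distinct [x1,p,y1,q,r,s]"
    "{x1,p,y1,q,r,s} = {x1,y1,x2,y2,x3,y3}" "{r,s} \<noteq> {x2,y2}" "{r,s} \<noteq> {x3,y3}"
  shows "(p \<in> {x2,y2} \<and> q \<in> {x3,y3} \<and> {r,s} = {if p = x2 then y2 else x2, if q = x3 then y3 else x3})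
       \<or> (p \<in> {x3,y3} \<and> q \<in> {x2,y2} \<and> {r,s} = {if q = x2 then y2 else x2, if p = x3 then y3 else x3})"
proof -
  have "p \<in> {x1,y1,x2,y2,x3,y3}" "q \<in> {x1,y1,x2,y2,x3,y3}" "r \<in> {x1,y1,x2,y2,x3,y3}"
    "s \<in> {x1,y1,x2,y2,x3,y3}" using assms(3) by blast+
  then have m: "p = x2 \<or> p = y2 \<or> p = x3 \<or> p = y3" "q = x2 \<or> q = y2 \<or> q = x3 \<or> q = y3"
    "r = x2 \<or> r = y2 \<or> r = x3 \<or> r = y3" "s = x2 \<or> s = y2 \<or> s = x3 \<or> s = y3"
    using assms(2) by auto
  show ?thesis using m(1) m(2) m(3) m(4) assms(1,2,4,5)
    by (elim disjE) (simp_all add: doubleton_eq_iff)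
qed


lemma ends_other:
  assumes "x \<in> ends c" "ctail c \<noteq> chead c"
  obtains p where "ends c = {x,p}" "p \<noteq> x"
proof (cases "x = ctail c")
  case True then show ?thesis using that[of "chead c"] assms by (auto simp: ends_def)
next
  case False then have "x = chead c" using assms by (simp add: ends_def)
  then show ?thesis using that[of "ctail c"] assms by (auto simp: ends_def)
qed

lemma struct:
  fixes T :: "chord set"
  assumes dist: "distinct [x1,y1,x2,y2,x3,y3]"
  and card: "card T = 3"
  and th: "\<forall>c\<in>T. ctail c \<noteq> chead c"
  and disj: "\<forall>c\<in>T. \<forall>d\<in>T. c \<noteq> d \<longrightarrow> ends c \<inter> ends d = {}"
  and un: "(\<Union>c\<in>T. ends c) = {x1,y1,x2,y2,x3,y3}"
  and tri: "\<forall>c\<in>T. ends c \<noteq> {x1,y1} \<and> ends c \<noteq> {x2,y2} \<and> ends c \<noteq> {x3,y3}"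
  shows "\<exists>k12 k13 k23 b1 b2 b3. T = {k12,k13,k23} \<and> k12 \<noteq> k13 \<and> k12 \<noteq> k23 \<and> k13 \<noteq> k23
     \<and> ends k12 = {if b1 then x1 else y1, if b2 then x2 else y2}
     \<and> ends k13 = {if b1 then y1 else x1, if b3 then x3 else y3}
     \<and> ends k23 = {if b2 then y2 else x2, if b3 then y3 else x3}"
proof -
  have "x1 \<in> (\<Union>c\<in>T. ends c)" "y1 \<in> (\<Union>c\<in>T. ends c)" using un by simp_all
  then obtain F G where F: "F \<in> T" "x1 \<in> ends F" and G: "G \<in> T" "y1 \<in> ends G" by blast
  obtain p where p: "ends F = {x1,p}" "p \<noteq> x1" using ends_other[OF F(2)] th F(1) by blast
  obtain q where q: "ends G = {y1,q}" "q \<noteq> y1" using ends_other[OF G(2)] th G(1) by blast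
  have FG: "F \<noteq> G"
  proof
    assume "F = G"
    then have "p = y1" using p q dist by auto
    then show False using p tri F by auto
  qed
  have "card (T - {F,G}) = 1" using card F G FG by (simp add: card_Diff_subset)
  then obtain H where H: "T - {F,G} = {H}" by (meson card_1_singletonE)
  then have TH: "T = {F,G,H}" "H \<noteq> F" "H \<noteq> G" "H \<in> T" using F G by auto
  obtain r s where rs: "ends H = {r,s}" "r \<noteq> s" using th TH(4) unfolding ends_def by auto
  have "ends F \<inter> ends G = {}" using disj F(1) G(1) FG by blast
  then have d1: "{x1,p} \<inter> {y1,q} = {}" using p q by simp
  have "ends F \<inter> ends H = {}" using disj F(1) TH FG by blast
  then have d2: "{x1,p} \<inter> {r,s} = {}" using p rs by simp
  have "ends G \<inter> ends H = {}" using disj G(1) TH FG by blast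
  then have d3: "{y1,q} \<inter> {r,s} = {}" using q rs by simp
  have "(\<Union>c\<in>T. ends c) = {x1,p,y1,q,r,s}" using TH p q rs by auto
  then have u6: "{x1,p,y1,q,r,s} = {x1,y1,x2,y2,x3,y3}" using un by simp
  have dd: "distinct [x1,p,y1,q,r,s]" using d1 d2 d3 p q rs by auto
  have t2: "{r,s} \<noteq> {x2,y2}" "{r,s} \<noteq> {x3,y3}" using tri TH rs by auto
  from core4[OF dist dd u6 t2] show ?thesis
  proof
    assume a: "p \<in> {x2,y2} \<and> q \<in> {x3,y3} \<and> {r,s} = {if p = x2 then y2 else x2, if q = x3 then y3 else x3}"
    show ?thesis
      apply (rule exI[of _ F], rule exI[of _ G], rule exI[of _ H])
      apply (rule exI[of _ True], rule exI[of _ "p = x2"], rule exI[of _ "q = x3"])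
      using a TH FG p q rs by auto
  next
    assume a: "p \<in> {x3,y3} \<and> q \<in> {x2,y2} \<and> {r,s} = {if q = x2 then y2 else x2, if p = x3 then y3 else x3}"
    show ?thesis
      apply (rule exI[of _ G], rule exI[of _ F], rule exI[of _ H])
      apply (rule exI[of _ False], rule exI[of _ "q = x2"], rule exI[of _ "p = x3"])
      using a TH FG p q rs by auto
  qed
qed

lemma card3_sorted:
  assumes "card (A::nat set) = 3"
  shows "\<exists>a1 a2 a3. a1 < a2 \<and> a2 < a3 \<and> A = {a1,a2,a3}"
proof -
  obtain x y z where A: "A = {x,y,z}" "x \<noteq> y" "y \<noteq> z" "x \<noteq> z"
    using assms by (auto simp: card_3_iff)
  consider "x<y \<and> y<z" | "x<z \<and> z<y" | "y<x \<and> x<z" | "y<z \<and> z<x" | "z<x \<and> x<y" | "z<y \<and> y<x"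
    using A(2-4) by linarith
  then show ?thesis
  proof cases
    case 1 then show ?thesis using A(1) by blast
  next
    case 2 then show ?thesis using A(1) by (intro exI[of _ x] exI[of _ z] exI[of _ y]) (simp add: insert_commute)
  next
    case 3 then show ?thesis using A(1) by (intro exI[of _ y] exI[of _ x] exI[of _ z]) (simp add: insert_commute)
  next
    case 4 then show ?thesis using A(1) by (intro exI[of _ y] exI[of _ z] exI[of _ x]) (simp add: insert_commute)
  next
    case 5 then show ?thesis using A(1) by (intro exI[of _ z] exI[of _ x] exI[of _ y]) (simp add: insert_commute)
  next
    case 6 then show ?thesis using A(1) by (intro exI[of _ z] exI[of _ y] exI[of _ x]) (simp add: insert_commute)
  qed
qed

lemma cyc_rev: "x \<noteq> y \<Longrightarrow> y \<noteq> z \<Longrightarrow> x \<noteq> z \<Longrightarrow> cyc_between z y (x::nat) = (\<not> cyc_between x y z)"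
  unfolding cyc_between_def by auto

lemma crosses_ends:
  assumes "ends c = {p,q}" "ends d = {r,s}" "distinct [p,q,r,s]"
    "ctail c \<noteq> chead c" "ctail d \<noteq> chead d"
  shows "crosses c d \<longleftrightarrow> (cyc_between p r q \<noteq> cyc_between p s q)"
proof -
  have c: "(ctail c = p \<and> chead c = q) \<or> (ctail c = q \<and> chead c = p)"
    using assms(1,4) by (auto simp: ends_def doubleton_eq_iff)
  have d: "(ctail d = r \<and> chead d = s) \<or> (ctail d = s \<and> chead d = r)"
    using assms(2,5) by (auto simp: ends_def doubleton_eq_iff)
  have dd: "p \<noteq> q" "p \<noteq> r" "p \<noteq> s" "q \<noteq> r" "q \<noteq> s" "r \<noteq> s" using assms(3) by auto
  show ?thesis using c d unfolding crosses_def
    by (elim disjE conjE) (simp_all add: cyc_rev[of p r q] cyc_rev[of p s q] dd dd[symmetric], blast+)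

qed

lemma parity3:
  assumes "T = {a,b,c}" "a \<noteq> b" "a \<noteq> c" "b \<noteq> c"
  shows "parity T a = (if crosses a b then -1 else 1) * (if crosses a c then -1 else 1)"
proof -
  have "{d\<in>T. d \<noteq> a \<and> crosses a d} = (if crosses a b then {b} else {}) \<union> (if crosses a c then {c} else {})"
    using assms by auto
  then show ?thesis using assms(4) unfolding parity_def by auto
qed

lemma pm1_cases: "(x::int) \<in> {1,-1} \<Longrightarrow> x = 1 \<or> x = -1" by auto

lemma sign_alg:
  fixes c12 c13 c23 B1 B2 B3 D12 D13 D23 :: int
  assumes "c12 = 1 \<or> c12 = -1" "c13 = 1 \<or> c13 = -1" "c23 = 1 \<or> c23 = -1"
    "B1 = 1 \<or> B1 = -1" "B2 = 1 \<or> B2 = -1" "B3 = 1 \<or> B3 = -1"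
    "D12 = 1 \<or> D12 = -1" "D13 = 1 \<or> D13 = -1" "D23 = 1 \<or> D23 = -1"
  shows "(c12 * (- B1 * B2) * D12 = c13 * (B1 * B3) * (- D13) \<and> c13 * (B1 * B3) * (- D13) = c23 * (- B2 * B3) * D23)
     \<longleftrightarrow> (B1 * (c12 * D12) = B3 * (c23 * D23) \<and> B2 * (c12 * D12) = B3 * (c13 * D13))"
  using assms by (elim disjE) simp_all

lemma arc_of_eq:
  assumes "a \<in> A" "x \<in> arc N a" "\<forall>a\<in>A. \<forall>b\<in>A. a \<noteq> b \<longrightarrow> arc N a \<inter> arc N b = {}"
  shows "arc_of N A x = a"
  unfolding arc_of_def
proof (rule the_equality)
  show "a \<in> A \<and> x \<in> arc N a" using assms by simp
next
  fix b assume "b \<in> A \<and> x \<in> arc N b"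
  then show "b = a" using assms by blast
qed

lemma chord_at_eq:
  assumes "c \<in> T" "x \<in> ends c" "\<forall>c\<in>T. \<forall>d\<in>T. c \<noteq> d \<longrightarrow> ends c \<inter> ends d = {}"
  shows "chord_at T x = c"
  unfolding chord_at_def
proof (rule the_equality)
  show "c \<in> T \<and> x \<in> ends c" using assms by simp
next
  fix b assume "b \<in> T \<and> x \<in> ends b"
  then show "b = c" using assms by blast
qed

lemma next_arc3:
  assumes "a1 < a2" "a2 < a3"
  shows "next_arc {a1,a2,a3} a1 = a2" "next_arc {a1,a2,a3} a2 = a3" "next_arc {a1,a2,a3} a3 = a1"
proof -
  have "{b \<in> {a1,a2,a3}. a1 < b} = {a2,a3}" using assms by auto
  then show "next_arc {a1,a2,a3} a1 = a2" using assms unfolding next_arc_def by auto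
  have "{b \<in> {a1,a2,a3}. a2 < b} = {a3}" using assms by auto
  then show "next_arc {a1,a2,a3} a2 = a3" using assms unfolding next_arc_def by auto
  have "\<not> (\<exists>b\<in>{a1,a2,a3}. a3 < b)" using assms by auto
  then show "next_arc {a1,a2,a3} a3 = a1" using assms unfolding next_arc_def by (simp add: min_def)
qed

lemma cross_vals:
  fixes x1 y1 x2 y2 x3 y3 :: nat
  assumes ord: "x1 < y1" "y1 < x2" "x2 < y2" "y2 < x3" "x3 < y3 \<or> y3 < x1"
  and e12: "ends k12 = {if b1 then x1 else y1, if b2 then x2 else y2}"
  and e13: "ends k13 = {if b1 then y1 else x1, if b3 then x3 else y3}"
  and e23: "ends k23 = {if b2 then y2 else x2, if b3 then y3 else x3}"
  and th: "ctail k12 \<noteq> chead k12" "ctail k13 \<noteq> chead k13" "ctail k23 \<noteq> chead k23"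
  shows "crosses k12 k13 = b1" "crosses k13 k12 = b1" "crosses k12 k23 = (\<not>b2)"
    "crosses k23 k12 = (\<not>b2)" "crosses k13 k23 = b3" "crosses k23 k13 = b3"
proof -
  have x: "crosses k12 k13 \<longleftrightarrow> (cyc_between (if b1 then x1 else y1) (if b1 then y1 else x1) (if b2 then x2 else y2)
     \<noteq> cyc_between (if b1 then x1 else y1) (if b3 then x3 else y3) (if b2 then x2 else y2))"
    by (rule crosses_ends[OF e12 e13 _ th(1,2)]) (cases b1; cases b2; cases b3; use ord in auto)
  show "crosses k12 k13 = b1" unfolding x using ord
    by (cases b1; cases b2; cases b3) (auto simp: cyc_between_def)
  have x: "crosses k13 k12 \<longleftrightarrow> (cyc_between (if b1 then y1 else x1) (if b1 then x1 else y1) (if b3 then x3 else y3)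
     \<noteq> cyc_between (if b1 then y1 else x1) (if b2 then x2 else y2) (if b3 then x3 else y3))"
    by (rule crosses_ends[OF e13 e12 _ th(2,1)]) (cases b1; cases b2; cases b3; use ord in auto)
  show "crosses k13 k12 = b1" unfolding x using ord
    by (cases b1; cases b2; cases b3) (auto simp: cyc_between_def)
  have x: "crosses k12 k23 \<longleftrightarrow> (cyc_between (if b1 then x1 else y1) (if b2 then y2 else x2) (if b2 then x2 else y2)
     \<noteq> cyc_between (if b1 then x1 else y1) (if b3 then y3 else x3) (if b2 then x2 else y2))"
    by (rule crosses_ends[OF e12 e23 _ th(1,3)]) (cases b1; cases b2; cases b3; use ord in auto)
  show "crosses k12 k23 = (\<not>b2)" unfolding x using ord
    by (cases b1; cases b2; cases b3) (auto simp: cyc_between_def)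
  have x: "crosses k23 k12 \<longleftrightarrow> (cyc_between (if b2 then y2 else x2) (if b1 then x1 else y1) (if b3 then y3 else x3)
     \<noteq> cyc_between (if b2 then y2 else x2) (if b2 then x2 else y2) (if b3 then y3 else x3))"
    by (rule crosses_ends[OF e23 e12 _ th(3,1)]) (cases b1; cases b2; cases b3; use ord in auto)
  show "crosses k23 k12 = (\<not>b2)" unfolding x using ord
    by (cases b1; cases b2; cases b3) (auto simp: cyc_between_def)
  have x: "crosses k13 k23 \<longleftrightarrow> (cyc_between (if b1 then y1 else x1) (if b2 then y2 else x2) (if b3 then x3 else y3)
     \<noteq> cyc_between (if b1 then y1 else x1) (if b3 then y3 else x3) (if b3 then x3 else y3))"
    by (rule crosses_ends[OF e13 e23 _ th(2,3)]) (cases b1; cases b2; cases b3; use ord in auto)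
  show "crosses k13 k23 = b3" unfolding x using ord
    by (cases b1; cases b2; cases b3) (auto simp: cyc_between_def)
  have x: "crosses k23 k13 \<longleftrightarrow> (cyc_between (if b2 then y2 else x2) (if b1 then y1 else x1) (if b3 then y3 else x3)
     \<noteq> cyc_between (if b2 then y2 else x2) (if b3 then x3 else y3) (if b3 then y3 else x3))"
    by (rule crosses_ends[OF e23 e13 _ th(3,2)]) (cases b1; cases b2; cases b3; use ord in auto)
  show "crosses k23 k13 = b3" unfolding x using ord
    by (cases b1; cases b2; cases b3) (auto simp: cyc_between_def)
qed


lemma match_abs:
  assumes da: "a1 \<noteq> a2" "a1 \<noteq> a3" "a2 \<noteq> a3" and dk: "k12 \<noteq> k13" "k12 \<noteq> k23" "k13 \<noteq> k23"
    and dp: "distinct [U1,U1',V2,V2',W3,W3']"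
    and ar: "arc N a1 = {U1,U1'}" "arc N a2 = {V2,V2'}" "arc N a3 = {W3,W3'}"
    and or12: "(ctail k12 = U1 \<and> chead k12 = V2) \<or> (ctail k12 = V2 \<and> chead k12 = U1)"
    and or13: "(ctail k13 = U1' \<and> chead k13 = W3) \<or> (ctail k13 = W3 \<and> chead k13 = U1')"
    and or23: "(ctail k23 = V2' \<and> chead k23 = W3') \<or> (ctail k23 = W3' \<and> chead k23 = V2')"
  shows "matched N {k12,k13,k23} {a1,a2,a3} \<longleftrightarrow>
     \<not>((ctail k12 = U1 \<and> ctail k23 = V2' \<and> ctail k13 = W3) \<or> (ctail k12 = V2 \<and> ctail k23 = W3' \<and> ctail k13 = U1'))"
proof -
  have ne: "U1 \<noteq> U1'" "U1 \<noteq> V2" "U1 \<noteq> V2'" "U1 \<noteq> W3" "U1 \<noteq> W3'" "U1' \<noteq> V2" "U1' \<noteq> V2'"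
    "U1' \<noteq> W3" "U1' \<noteq> W3'" "V2 \<noteq> V2'" "V2 \<noteq> W3" "V2 \<noteq> W3'" "V2' \<noteq> W3" "V2' \<noteq> W3'" "W3 \<noteq> W3'"
    using dp by auto
  show ?thesis
    unfolding matched_def ar using or12 or13 or23
    by (elim disjE conjE) (simp_all add: ar da dk ne ne[symmetric] da[symmetric] dk[symmetric])
qed

lemma same_chord:
  assumes "\<forall>c\<in>T. \<forall>d\<in>T. c \<noteq> d \<longrightarrow> ends c \<inter> ends d = {}" "c \<in> T" "d \<in> T" "x \<in> ends c" "x \<in> ends d"
  shows "c = d"
  using assms by blast

theorem mainTheorem1:
  fixes N :: nat and D T :: "chord set" and A :: "nat set"
  assumes "gauss_diagram N D"
    and "triple_with_arcs N D T A"
  shows "three_movable N T A \<longleftrightarrow>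
           (matched N T A \<and> (\<forall>c\<in>T. \<forall>d\<in>T. three_sign N T A c = three_sign N T A d))"
proof -
  from assms(1) have chD: "\<forall>c\<in>D. ctail c < N \<and> chead c < N \<and> ctail c \<noteq> chead c \<and> (csign c = 1 \<or> csign c = -1)"
    and disjD: "\<forall>c\<in>D. \<forall>d\<in>D. c \<noteq> d \<longrightarrow> ends c \<inter> ends d = {}"
    unfolding gauss_diagram_def by auto
  from assms(2) have TD: "T \<subseteq> D" and cT: "card T = 3" and AN: "A \<subseteq> {0..<N}" and cA: "card A = 3"
    and adisj: "\<forall>a\<in>A. \<forall>b\<in>A. a \<noteq> b \<longrightarrow> arc N a \<inter> arc N b = {}"
    and un: "(\<Union>a\<in>A. arc N a) = (\<Union>c\<in>T. ends c)"
    unfolding triple_with_arcs_def by auto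
  have th: "\<forall>c\<in>T. ctail c \<noteq> chead c" and sgT: "\<forall>c\<in>T. csign c = 1 \<or> csign c = -1"
    using chD TD by auto
  have disj: "\<forall>c\<in>T. \<forall>d\<in>T. c \<noteq> d \<longrightarrow> ends c \<inter> ends d = {}" using disjD TD by blast
  obtain a1 a2 a3 where a: "a1 < a2" "a2 < a3" and A: "A = {a1,a2,a3}"
    using card3_sorted[OF cA] by blast
  have a3N: "a3 < N" using AN A by auto
  define y1 where "y1 = Suc a1 mod N"
  define y2 where "y2 = Suc a2 mod N"
  define y3 where "y3 = Suc a3 mod N"
  have y12: "y1 = Suc a1" "y2 = Suc a2" using a a3N by (auto simp: y1_def y2_def)
  have arcs: "arc N a1 = {a1,y1}" "arc N a2 = {a2,y2}" "arc N a3 = {a3,y3}"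
    by (simp_all add: arc_def y1_def y2_def y3_def)
  have i12: "arc N a1 \<inter> arc N a2 = {}" and i23: "arc N a2 \<inter> arc N a3 = {}" and i13: "arc N a1 \<inter> arc N a3 = {}"
    using adisj a unfolding A by auto
  have o1: "Suc a1 < a2" using i12 a unfolding arcs y12 by auto
  have o2: "Suc a2 < a3" using i23 a unfolding arcs y12 by auto
  have o3: "a3 < y3 \<or> y3 < a1"
  proof (cases "Suc a3 < N")
    case True then show ?thesis by (simp add: y3_def)
  next
    case False
    then have "Suc a3 = N" using a3N by simp
    then have "y3 = 0" by (simp add: y3_def)
    moreover have "a1 \<noteq> y3" using i13 unfolding arcs by auto
    ultimately show ?thesis by simp
  qed
  have ord: "a1 < y1" "y1 < a2" "a2 < y2" "y2 < a3" "a3 < y3 \<or> y3 < a1"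
    using o1 o2 o3 y12 by auto
  have dist6: "distinct [a1,y1,a2,y2,a3,y3]" using ord by auto
  have un6: "(\<Union>c\<in>T. ends c) = {a1,y1,a2,y2,a3,y3}" using un unfolding A by (auto simp: arcs)
  have aA: "a1 \<in> A" "a2 \<in> A" "a3 \<in> A" using A by auto
  have aof1: "\<And>x. x \<in> arc N a1 \<Longrightarrow> arc_of N A x = a1" by (rule arc_of_eq[OF aA(1) _ adisj])
  have aof2: "\<And>x. x \<in> arc N a2 \<Longrightarrow> arc_of N A x = a2" by (rule arc_of_eq[OF aA(2) _ adisj])
  have aof3: "\<And>x. x \<in> arc N a3 \<Longrightarrow> arc_of N A x = a3" by (rule arc_of_eq[OF aA(3) _ adisj])
  show ?thesis
  proof (cases "\<forall>c\<in>T. arc_of N A (ctail c) \<noteq> arc_of N A (chead c)")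
    case False
    then obtain c where c: "c \<in> T" "arc_of N A (ctail c) = arc_of N A (chead c)" by blast
    have nm: "\<not> three_movable N T A" using c unfolding three_movable_def by blast
    have "ctail c \<in> (\<Union>c\<in>T. ends c)" "chead c \<in> (\<Union>c\<in>T. ends c)" using c(1) by (auto simp: ends_def)
    then have "ctail c \<in> (\<Union>a\<in>A. arc N a)" "chead c \<in> (\<Union>a\<in>A. arc N a)" using un by simp_all
    then obtain b b' where b: "b \<in> A" "ctail c \<in> arc N b" and b': "b' \<in> A" "chead c \<in> arc N b'" by blast
    have "arc_of N A (ctail c) = b" by (rule arc_of_eq[OF b(1) b(2) adisj])
    moreover have "arc_of N A (chead c) = b'" by (rule arc_of_eq[OF b'(1) b'(2) adisj])
    ultimately have bb: "b' = b" using c(2) by simp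
    have tc: "ctail c \<noteq> chead c" using th c(1) by blast
    have ec: "ends c = arc N b"
    proof -
      have "ctail c \<in> {b, Suc b mod N}" "chead c \<in> {b, Suc b mod N}" using b(2) b'(2) bb by (simp_all add: arc_def)
      then have "{ctail c, chead c} = {b, Suc b mod N}" using tc by auto
      then show ?thesis by (simp add: ends_def arc_def)
    qed
    have nmat: "\<not> matched N T A"
    proof
      assume "matched N T A"
      then obtain ah atl am where m: "ah \<in> A" "atl \<in> A" "am \<in> A" "ah \<noteq> atl" "ah \<noteq> am" "atl \<noteq> am"
        "arc N ah \<subseteq> chead ` T" "arc N atl \<subseteq> ctail ` T"
        and mc: "\<exists>c\<in>T. \<exists>d\<in>T. c \<noteq> d \<and> chead c \<in> arc N am \<and> ctail d \<in> arc N am"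
        unfolding matched_def by blast
      have "b = ah \<or> b = atl \<or> b = am" using m(1-6) b(1) unfolding A by auto
      then show False
      proof (elim disjE)
        assume "b = ah"
        then have "ctail c \<in> chead ` T" using m(7) b(2) by auto
        then obtain d where d: "d \<in> T" "ctail c = chead d" by auto
        then have "d = c" using same_chord[OF disj d(1) c(1), of "ctail c"] by (simp add: ends_def)
        then show False using d tc by simp
      next
        assume "b = atl"
        then have "chead c \<in> ctail ` T" using m(8) b'(2) bb by auto
        then obtain d where d: "d \<in> T" "chead c = ctail d" by auto
        then have "d = c" using same_chord[OF disj d(1) c(1), of "chead c"] by (simp add: ends_def)
        then show False using d tc by simp
      next
        assume "b = am"
        then have e: "arc N am = ends c" using ec by simp
        obtain c' d' where cd: "c' \<in> T" "d' \<in> T" "c' \<noteq> d'" "chead c' \<in> ends c" "ctail d' \<in> ends c"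
          using mc unfolding e by blast
        have "c' = c" using same_chord[OF disj cd(1) c(1) _ cd(4)] by (simp add: ends_def)
        moreover have "d' = c" using same_chord[OF disj cd(2) c(1) _ cd(5)] by (simp add: ends_def)
        ultimately show False using cd(3) by simp
      qed
    qed
    show ?thesis using nm nmat by blast
  next
    case True
    have tri: "\<forall>c\<in>T. ends c \<noteq> {a1,y1} \<and> ends c \<noteq> {a2,y2} \<and> ends c \<noteq> {a3,y3}"
    proof
      fix c assume c: "c \<in> T"
      have ne: "ends c \<noteq> arc N a" if "a \<in> A" for a
      proof
        assume e: "ends c = arc N a"
        then have "ctail c \<in> arc N a" "chead c \<in> arc N a" by (auto simp: ends_def)
        then have "arc_of N A (ctail c) = a" "arc_of N A (chead c) = a"
          using arc_of_eq[OF that _ adisj] by auto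
        then show False using True c by auto
      qed
      show "ends c \<noteq> {a1,y1} \<and> ends c \<noteq> {a2,y2} \<and> ends c \<noteq> {a3,y3}"
        using ne[OF aA(1)] ne[OF aA(2)] ne[OF aA(3)] unfolding arcs by blast
    qed
    obtain k12 k13 k23 b1 b2 b3 where Tk: "T = {k12,k13,k23}" and dk: "k12 \<noteq> k13" "k12 \<noteq> k23" "k13 \<noteq> k23"
      and e12: "ends k12 = {if b1 then a1 else y1, if b2 then a2 else y2}"
      and e13: "ends k13 = {if b1 then y1 else a1, if b3 then a3 else y3}"
      and e23: "ends k23 = {if b2 then y2 else a2, if b3 then y3 else a3}"
      using struct[OF dist6 cT th disj un6 tri] by blast
    have kT: "k12 \<in> T" "k13 \<in> T" "k23 \<in> T" using Tk by auto
    have thk: "ctail k12 \<noteq> chead k12" "ctail k13 \<noteq> chead k13" "ctail k23 \<noteq> chead k23"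
      using th kT by auto
    have sg: "csign k12 = 1 \<or> csign k12 = -1" "csign k13 = 1 \<or> csign k13 = -1" "csign k23 = 1 \<or> csign k23 = -1"
      using sgT kT by auto
    have da: "a1 \<noteq> a2" "a1 \<noteq> a3" "a2 \<noteq> a3" using a by auto
    define U1 where "U1 = (if b1 then a1 else y1)"
    define U1' where "U1' = (if b1 then y1 else a1)"
    define V2 where "V2 = (if b2 then a2 else y2)"
    define V2' where "V2' = (if b2 then y2 else a2)"
    define W3 where "W3 = (if b3 then a3 else y3)"
    define W3' where "W3' = (if b3 then y3 else a3)"
    have e12': "ends k12 = {U1, V2}" using e12 by (simp add: U1_def V2_def)
    have e13': "ends k13 = {U1', W3}" using e13 by (simp add: U1'_def W3_def)
    have e23': "ends k23 = {V2', W3'}" using e23 by (simp add: V2'_def W3'_def)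
    have or12: "(ctail k12 = U1 \<and> chead k12 = V2) \<or> (ctail k12 = V2 \<and> chead k12 = U1)"
      using e12' thk(1) by (auto simp: ends_def doubleton_eq_iff)
    have or13: "(ctail k13 = U1' \<and> chead k13 = W3) \<or> (ctail k13 = W3 \<and> chead k13 = U1')"
      using e13' thk(2) by (auto simp: ends_def doubleton_eq_iff)
    have or23: "(ctail k23 = V2' \<and> chead k23 = W3') \<or> (ctail k23 = W3' \<and> chead k23 = V2')"
      using e23' thk(3) by (auto simp: ends_def doubleton_eq_iff)
    have ar: "arc N a1 = {U1,U1'}" "arc N a2 = {V2,V2'}" "arc N a3 = {W3,W3'}"
      by (auto simp: arcs U1_def U1'_def V2_def V2'_def W3_def W3'_def)
    have dp: "distinct [U1,U1',V2,V2',W3,W3']"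
      using dist6 by (auto simp: U1_def U1'_def V2_def V2'_def W3_def W3'_def)
    have aofs: "arc_of N A U1 = a1" "arc_of N A U1' = a1" "arc_of N A V2 = a2" "arc_of N A V2' = a2"
      "arc_of N A W3 = a3" "arc_of N A W3' = a3"
      using aof1 aof2 aof3 ar by auto
    have o12: "(arc_of N A (ctail k12) = a1 \<and> arc_of N A (chead k12) = a2) \<or> (arc_of N A (ctail k12) = a2 \<and> arc_of N A (chead k12) = a1)"
      using or12 aofs by auto
    have o13: "(arc_of N A (ctail k13) = a1 \<and> arc_of N A (chead k13) = a3) \<or> (arc_of N A (ctail k13) = a3 \<and> arc_of N A (chead k13) = a1)"
      using or13 aofs by auto
    have o23: "(arc_of N A (ctail k23) = a2 \<and> arc_of N A (chead k23) = a3) \<or> (arc_of N A (ctail k23) = a3 \<and> arc_of N A (chead k23) = a2)"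
      using or23 aofs by auto
    have tq: "arc_of N A (ctail k12) = a1 \<longleftrightarrow> ctail k12 = U1" "arc_of N A (ctail k12) = a2 \<longleftrightarrow> ctail k12 = V2"
      "arc_of N A (ctail k13) = a1 \<longleftrightarrow> ctail k13 = U1'" "arc_of N A (ctail k13) = a3 \<longleftrightarrow> ctail k13 = W3"
      "arc_of N A (ctail k23) = a2 \<longleftrightarrow> ctail k23 = V2'" "arc_of N A (ctail k23) = a3 \<longleftrightarrow> ctail k23 = W3'"
      using or12 or13 or23 aofs da dp by auto
    have Fs: "chord_at T a1 = (if b1 then k12 else k13)" "chord_at T (Suc a1 mod N) = (if b1 then k13 else k12)"
      "chord_at T a2 = (if b2 then k12 else k23)" "chord_at T (Suc a2 mod N) = (if b2 then k23 else k12)"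
      "chord_at T a3 = (if b3 then k13 else k23)" "chord_at T (Suc a3 mod N) = (if b3 then k23 else k13)"
      unfolding y1_def[symmetric] y2_def[symmetric] y3_def[symmetric]
      by (cases b1; cases b2; cases b3;
          simp add: chord_at_eq[OF kT(1) _ disj] chord_at_eq[OF kT(2) _ disj] chord_at_eq[OF kT(3) _ disj] e12 e13 e23)+
    have MOV: "three_movable N T A \<longleftrightarrow>
       (\<not>((arc_of N A (ctail k12) = a1 \<and> arc_of N A (ctail k23) = a2 \<and> arc_of N A (ctail k13) = a3)
          \<or> (arc_of N A (ctail k12) = a2 \<and> arc_of N A (ctail k23) = a3 \<and> arc_of N A (ctail k13) = a1))
     \<and> sb b1 * (csign k12 * sb (arc_of N A (ctail k12) = a1)) = sb b3 * (csign k23 * sb (arc_of N A (ctail k23) = a2))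
     \<and> sb b2 * (csign k12 * sb (arc_of N A (ctail k12) = a1)) = sb b3 * (csign k13 * sb (arc_of N A (ctail k13) = a1)))"
      unfolding three_movable_def
      by (rule geom_iff[where ov = "\<lambda>c. arc_of N A (ctail c)" and uv = "\<lambda>c. arc_of N A (chead c)"
            and F = "chord_at T" and S = "\<lambda>a. chord_at T (Suc a mod N)", OF A Tk da dk o12 o13 o23 Fs sg])
    have MAT: "matched N T A \<longleftrightarrow>
     \<not>((ctail k12 = U1 \<and> ctail k23 = V2' \<and> ctail k13 = W3) \<or> (ctail k12 = V2 \<and> ctail k23 = W3' \<and> ctail k13 = U1'))"
      unfolding A Tk by (rule match_abs[OF da dk dp ar or12 or13 or23])
    have cv: "crosses k12 k13 = b1" "crosses k13 k12 = b1" "crosses k12 k23 = (\<not>b2)"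
      "crosses k23 k12 = (\<not>b2)" "crosses k13 k23 = b3" "crosses k23 k13 = b3"
      using cross_vals[OF ord e12 e13 e23 thk] by auto
    have p12: "parity T k12 = - sb b1 * sb b2"
      using parity3[OF Tk dk] cv by (simp add: sb_def)
    have p13: "parity T k13 = sb b1 * sb b3"
      using parity3[of T k13 k12 k23] Tk dk cv by (simp add: sb_def insert_commute)
    have p23: "parity T k23 = - sb b2 * sb b3"
      using parity3[of T k23 k12 k13] Tk dk cv by (simp add: sb_def insert_commute)
    have nx: "next_arc A a1 = a2" "next_arc A a2 = a3" "next_arc A a3 = a1"
      using next_arc3[OF a] unfolding A by auto
    have d12: "direction N A k12 = sb (arc_of N A (ctail k12) = a1)"
      using o12 da unfolding direction_def by (elim disjE conjE) (simp_all add: nx sb_def)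
    have d13: "direction N A k13 = - sb (arc_of N A (ctail k13) = a1)"
      using o13 da unfolding direction_def by (elim disjE conjE) (simp_all add: nx sb_def)
    have d23: "direction N A k23 = sb (arc_of N A (ctail k23) = a2)"
      using o23 da unfolding direction_def by (elim disjE conjE) (simp_all add: nx sb_def)
    have ts: "three_sign N T A k12 = csign k12 * (- sb b1 * sb b2) * sb (arc_of N A (ctail k12) = a1)"
      "three_sign N T A k13 = csign k13 * (sb b1 * sb b3) * (- sb (arc_of N A (ctail k13) = a1))"
      "three_sign N T A k23 = csign k23 * (- sb b2 * sb b3) * sb (arc_of N A (ctail k23) = a2)"
      unfolding three_sign_def p12 p13 p23 d12 d13 d23 by simp_all
    have sbpm: "\<And>b. sb b = 1 \<or> sb b = -1" by (simp add: sb_def)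
    have SGN: "(\<forall>c\<in>T. \<forall>d\<in>T. three_sign N T A c = three_sign N T A d) \<longleftrightarrow>
       (sb b1 * (csign k12 * sb (arc_of N A (ctail k12) = a1)) = sb b3 * (csign k23 * sb (arc_of N A (ctail k23) = a2))
     \<and> sb b2 * (csign k12 * sb (arc_of N A (ctail k12) = a1)) = sb b3 * (csign k13 * sb (arc_of N A (ctail k13) = a1)))"
    proof -
      have "(\<forall>c\<in>T. \<forall>d\<in>T. three_sign N T A c = three_sign N T A d) \<longleftrightarrow>
          (three_sign N T A k12 = three_sign N T A k13 \<and> three_sign N T A k13 = three_sign N T A k23)"
        unfolding Tk by auto
      also have "\<dots> \<longleftrightarrow> (sb b1 * (csign k12 * sb (arc_of N A (ctail k12) = a1)) = sb b3 * (csign k23 * sb (arc_of N A (ctail k23) = a2))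
     \<and> sb b2 * (csign k12 * sb (arc_of N A (ctail k12) = a1)) = sb b3 * (csign k13 * sb (arc_of N A (ctail k13) = a1)))"
        unfolding ts by (rule sign_alg[OF sg sbpm sbpm sbpm sbpm sbpm sbpm])
      finally show ?thesis .
    qed
    show ?thesis unfolding MOV MAT SGN by (simp add: tq)
  qed
qed

end
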